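(* Let $n\ge p$. For $\mathcal X\in\mathrm{St}(n,p,l)$ and $\mathcal V\in T_{\mathcal X}\mathrm{St}(n,p,l)$ put $\mathcal P=\mathcal I-\frac12\mathcal X*\mathcal X^\top\in\mathbb R^{n\times n\times l}$ and $\mathcal W_{\mathcal V}=\mathcal P*\mathcal V*\mathcal X^\top-\mathcal X*\mathcal V^\top*\mathcal P$ (a skew-symmetric tensor in $\mathbb R^{n\times n\times l}$). Then $$R_{\mathcal X}(\mathcal V)=\Big(\mathcal I-\tfrac12\mathcal W_{\mathcal V}\Big)^{-1}*\Big(\mathcal I+\tfrac12\mathcal W_{\mathcal V}\Big)*\mathcal X$$ is well defined and is a retraction on $\mathrm{St}(n,p,l)$.
   Context: Frontal slices $A^{(i)}=\mathcal A(:,:,i)$. The t-product is $\mathcal A*\mathcal B=\operatorname{fold}(\operatorname{bcirc}(\mathcal A)\operatorname{unfold}(\mathcal B))$, where $\operatorname{bcirc}(\mathcal A)$ is the block circulant matrix with $(i,j)$ block $A^{(((i-j)\bmod l)+1)}$, $\operatorname{unfold}$ stacks frontal slices vertically, $\operatorname{fold}$ is its inverse. Transpose: $\mathcal A^\top$ has frontal slices $(A^{(1)})^\top,(A^{(l)})^\top,\dots,(A^{(2)})^\top$. $\mathcal I$ is the identity tensor (first frontal slice identity, others zero), and $\mathcal A^{-1}$ the t-product inverse. A tensor $\mathcal W$ is skew-symmetric if $\mathcal W^\top=-\mathcal W$. $\mathrm{St}(n,p,l)=\{\mathcal X\in\mathbb R^{n\times p\times l}:\mathcal X^\top*\mathcal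 X=\mathcal I\}$, an embedded submanifold of $\mathbb R^{n\times p\times l}$. A retraction on a manifold $M$ is a smooth map $R:TM\to M$ with $R_x(0_x)=x$ and $\mathrm DR_x(0_x)=\mathrm{id}_{T_xM}$. *)

theory Defs
  imports "HOL-Analysis.Analysis"
begin

type_synonym ('n, 'p, 'l) tensor = "(((real, 'l) vec, 'p) vec, 'n) vec"

text \<open>A tensor in R^(n x p x l) is an element of type ('n, 'p, 'l) tensor,
  entry (i,j,k) being A$i$j$k; the frontal slice A^(k) is the matrix
  (\<lambda>i j. A$i$j$k).  The frontal index type 'l is an enum type; its
  elements are numbered 0,...,l-1 by their position in Enum.enum
  (for the numeral types this is the natural order).  Slice A^(k+1) in
  the paper's 1-based numbering is the slice at position k.\<close>

definition fslot :: "nat \<Rightarrow> 'l::enum" where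
  "fslot k = Enum.enum ! (k mod CARD('l))"

definition fpos :: "'l::enum \<Rightarrow> nat" where
  "fpos x = (THE k. k < CARD('l) \<and> (Enum.enum :: 'l list) ! k = x)"

text \<open>t-product: fold(bcirc(A) unfold(B)); block (k,m) of bcirc(A) is the
  slice at position (k - m) mod l.\<close>
definition tprod :: "('n::finite, 'q::finite, 'l::enum) tensor \<Rightarrow> ('q, 'p::finite, 'l) tensor \<Rightarrow> ('n, 'p, 'l) tensor" where
  "tprod A B = (\<chi> i j k. \<Sum>m\<in>UNIV. \<Sum>q\<in>UNIV.
      A$i$q$(fslot (fpos k + CARD('l::enum) - fpos m)) * B$q$j$m)"

text \<open>Transpose: slices (A^(1))^T, (A^(l))^T, ..., (A^(2))^T.\<close>
definition ttrans :: "('n::finite, 'p::finite, 'l::enum) tensor \<Rightarrow> ('p, 'n, 'l) tensor" where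
  "ttrans A = (\<chi> j i k. A$i$j$(fslot (CARD('l::enum) - fpos k)))"

definition tid :: "('n::finite, 'n::finite, 'l::enum) tensor" where
  "tid = (\<chi> i j k. if i = j \<and> fpos k = 0 then 1 else 0)"

definition tinvertible :: "('n::finite, 'n::finite, 'l::enum) tensor \<Rightarrow> bool" where
  "tinvertible A \<longleftrightarrow> (\<exists>B. tprod A B = tid \<and> tprod B A = tid)"

definition tinv :: "('n::finite, 'n::finite, 'l::enum) tensor \<Rightarrow> ('n, 'n, 'l) tensor" where
  "tinv A = (THE B. tprod A B = tid \<and> tprod B A = tid)"

definition tskew :: "('n::finite, 'n::finite, 'l::enum) tensor \<Rightarrow> bool" where
  "tskew W \<longleftrightarrow> ttrans W = - W"

definition tstiefel :: "(('n::finite, 'p::finite, 'l::enum) tensor) set" where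
  "tstiefel = {X. tprod (ttrans X) X = tid}"

text \<open>C^infinity on an open set: iterated (Frechet) derivatives of every
  order exist; D k x hs is the k-th derivative at x applied to the
  directions hs (length k).\<close>
definition smooth_on :: "'a::euclidean_space set \<Rightarrow> ('a \<Rightarrow> 'b::euclidean_space) \<Rightarrow> bool" where
  "smooth_on U f \<longleftrightarrow> open U \<and>
     (\<exists>D :: nat \<Rightarrow> 'a \<Rightarrow> 'a list \<Rightarrow> 'b.
        (\<forall>x\<in>U. D 0 x [] = f x) \<and>
        (\<forall>k x hs. x \<in> U \<and> length hs = k \<longrightarrow>
           ((\<lambda>y. D k y hs) has_derivative (\<lambda>h. D (Suc k) x (h # hs))) (at x)))"

definition smooth_on_set :: "'a::euclidean_space set \<Rightarrow> ('a \<Rightarrow> 'b::euclidean_space) \<Rightarrow> bool" where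
  "smooth_on_set S f \<longleftrightarrow>
     (\<forall>x\<in>S. \<exists>U F. x \<in> U \<and> smooth_on U F \<and> (\<forall>y\<in>U \<inter> S. F y = f y))"

definition tangent_space :: "'a::euclidean_space set \<Rightarrow> 'a \<Rightarrow> 'a set" where
  "tangent_space M x = {v. \<exists>\<gamma> e. e > 0 \<and> \<gamma> 0 = x \<and> (\<forall>t\<in>{-e<..<e}. \<gamma> t \<in> M) \<and>
       (\<gamma> has_vector_derivative v) (at 0)}"

definition tangent_bundle :: "'a::euclidean_space set \<Rightarrow> ('a \<times> 'a) set" where
  "tangent_bundle M = {(x, v). x \<in> M \<and> v \<in> tangent_space M x}"

definition is_retraction :: "'a::euclidean_space set \<Rightarrow> ('a \<Rightarrow> 'a \<Rightarrow> 'a) \<Rightarrow> bool" where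
  "is_retraction M R \<longleftrightarrow>
     smooth_on_set (tangent_bundle M) (\<lambda>(x, v). R x v) \<and>
     (\<forall>x\<in>M. \<forall>v\<in>tangent_space M x. R x v \<in> M) \<and>
     (\<forall>x\<in>M. R x 0 = x) \<and>
     (\<forall>x\<in>M. (R x has_derivative (\<lambda>v. v)) (at 0 within tangent_space M x))"

definition tP :: "('n::finite, 'p::finite, 'l::enum) tensor \<Rightarrow> ('n, 'n, 'l) tensor" where
  "tP X = tid - (1/2) *\<^sub>R tprod X (ttrans X)"

definition tW :: "('n::finite, 'p::finite, 'l::enum) tensor \<Rightarrow> ('n, 'p, 'l) tensor \<Rightarrow> ('n, 'n, 'l) tensor" where
  "tW X V = tprod (tprod (tP X) V) (ttrans X) - tprod (tprod X (ttrans V)) (tP X)"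

definition cayley_retr :: "('n::finite, 'p::finite, 'l::enum) tensor \<Rightarrow> ('n, 'p, 'l) tensor \<Rightarrow> ('n, 'p, 'l) tensor" where
  "cayley_retr X V =
     tprod (tprod (tinv (tid - (1/2) *\<^sub>R tW X V)) (tid + (1/2) *\<^sub>R tW X V)) X"

end

theory Submission
  imports Defs
begin

lemma L_pos: "0 < CARD('l::enum)"
  by simp

lemma len_enum: "length (Enum.enum :: 'l::enum list) = CARD('l)"
  by (metis distinct_card enum_UNIV enum_distinct)

lemma fpos_prop: "fpos (x::'l::enum) < CARD('l) \<and> (Enum.enum :: 'l list) ! fpos x = x"
proof -
  have ex: "\<exists>!k. k < CARD('l) \<and> (Enum.enum :: 'l list) ! k = x"
  proof -
    have "x \<in> set (Enum.enum :: 'l list)" by (simp add: enum_UNIV)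
    then obtain k where "k < length (Enum.enum :: 'l list)" "(Enum.enum :: 'l list) ! k = x"
      by (auto simp: in_set_conv_nth)
    moreover have "\<And>k'. k' < CARD('l) \<Longrightarrow> (Enum.enum :: 'l list) ! k' = x \<Longrightarrow> k' = k"
      using calculation enum_distinct nth_eq_iff_index_eq len_enum by metis
    ultimately show ?thesis using len_enum by metis
  qed
  show ?thesis unfolding fpos_def by (rule theI'[OF ex])
qed

lemma fpos_lt[simp]: "fpos (x::'l::enum) < CARD('l)" using fpos_prop by blast

lemma fslot_fpos[simp]: "fslot (fpos (x::'l::enum)) = x"
  using fpos_prop[of x] by (simp add: fslot_def)

lemma fpos_fslot[simp]: "fpos (fslot m :: 'l::enum) = m mod CARD('l)"
proof -
  have "m mod CARD('l) < CARD('l)" by simp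
  have ex: "\<exists>!k. k < CARD('l) \<and> (Enum.enum :: 'l list) ! k = fslot m"
    by (metis (no_types, lifting) enum_distinct fpos_prop len_enum nth_eq_iff_index_eq)
  have a: "fpos (fslot m :: 'l) < CARD('l) \<and> (Enum.enum :: 'l list) ! fpos (fslot m :: 'l) = fslot m"
    by (rule fpos_prop)
  have b: "m mod CARD('l) < CARD('l) \<and> (Enum.enum :: 'l list) ! (m mod CARD('l)) = fslot m"
    by (simp add: fslot_def)
  show ?thesis using ex a b by blast
qed

lemma fslot_mod: "(fslot (m mod CARD('l)) :: 'l::enum) = fslot m"
  by (simp add: fslot_def)

lemma fslot_eq_iff: "((fslot a :: 'l::enum) = fslot b) \<longleftrightarrow> a mod CARD('l) = b mod CARD('l)"
  by (metis fpos_fslot fslot_mod)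

lemma fpos_inj: "fpos (x::'l::enum) = fpos y \<longleftrightarrow> x = y"
  by (metis fslot_fpos)

lemma modarith1:
  fixes L a b c :: nat
  assumes "0 < L" "a < L" "b < L" "c < L"
  shows "((a + L - b) mod L + L - (c + L - b) mod L) mod L = (a + L - c) mod L"
proof -
  have e1: "(a + L - b) mod L = (if b \<le> a then a - b else a + L - b)"
    using assms by (auto simp: mod_if le_mod_geq)
  have e2: "(c + L - b) mod L = (if b \<le> c then c - b else c + L - b)"
    using assms by (auto simp: mod_if le_mod_geq)
  have e3: "(a + L - c) mod L = (if c \<le> a then a - c else a + L - c)"
    using assms by (auto simp: mod_if le_mod_geq)
  show ?thesis using assms unfolding e1 e2 e3
    by (auto simp: mod_if le_mod_geq)
qed

lemma modarith2:
  fixes L a b :: nat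
  assumes "0 < L" "a < L" "b < L"
  shows "(L - (a + L - b) mod L) mod L = (b + L - a) mod L"
proof -
  have e1: "(a + L - b) mod L = (if b \<le> a then a - b else a + L - b)"
    using assms by (auto simp: mod_if le_mod_geq)
  have e3: "(b + L - a) mod L = (if a \<le> b then b - a else b + L - a)"
    using assms by (auto simp: mod_if le_mod_geq)
  show ?thesis using assms unfolding e1 e3
    by (auto simp: mod_if le_mod_geq)
qed

definition bc :: "('n::finite,'p::finite,'l::enum) tensor \<Rightarrow> real^('p\<times>'l)^('n\<times>'l)" where
  "bc A = (\<chi> r c. A $ fst r $ fst c $ fslot (fpos (snd r) + CARD('l) - fpos (snd c)))"

lemma bc_entry: "bc A $ r $ c = A $ fst r $ fst c $ fslot (fpos (snd r) + CARD('l::enum) - fpos (snd c))"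
  for A :: "('n::finite,'p::finite,'l::enum) tensor"
  by (simp add: bc_def)

lemma vecI: "(\<And>i. x $ i = y $ i) \<Longrightarrow> x = y" by (simp add: vec_eq_iff)

lemma modarith3:
  fixes L a b c :: nat
  assumes "a < L" "b < L" "c < L" "(a + L - c) mod L = (b + L - c) mod L"
  shows "a = b"
proof -
  have e1: "(a + L - c) mod L = (if c \<le> a then a - c else a + L - c)"
    using assms(1-3) by (auto simp: mod_if le_mod_geq)
  have e2: "(b + L - c) mod L = (if c \<le> b then b - c else b + L - c)"
    using assms(1-3) by (auto simp: mod_if le_mod_geq)
  have h: "(if c \<le> a then a - c else a + L - c) = (if c \<le> b then b - c else b + L - c)"
    using assms(4) unfolding e1 e2 .
  show ?thesis
  proof (cases "c \<le> a")
    case True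
    show ?thesis
    proof (cases "c \<le> b")
      case True
      then show ?thesis using h \<open>c \<le> a\<close> by simp
    next
      case False
      then have "a - c = b + L - c" using h \<open>c \<le> a\<close> by simp
      then show ?thesis using assms(1-3) False \<open>c \<le> a\<close> by linarith
    qed
  next
    case F: False
    show ?thesis
    proof (cases "c \<le> b")
      case True
      then have "a + L - c = b - c" using h F by simp
      then show ?thesis using assms(1-3) True F by linarith
    next
      case False
      then have "a + L - c = b + L - c" using h F by simp
      then show ?thesis using assms(1-3) by linarith
    qed
  qed
qed

lemma modarith4:
  fixes L a b :: nat
  assumes "a < L" "b < L"
  shows "(a + L - b) mod L = 0 \<longleftrightarrow> a = b"
proof -
  have e1: "(a + L - b) mod L = (if b \<le> a then a - b else a + L - b)"
    using assms by (auto simp: mod_if le_mod_geq)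
  show ?thesis using assms unfolding e1 by auto
qed

lemma shift_bij:
  fixes t :: "'l::enum"
  shows "bij (\<lambda>u::'l. fslot (fpos u + CARD('l) - fpos t) :: 'l)"
proof -
  have "inj (\<lambda>u::'l. fslot (fpos u + CARD('l) - fpos t) :: 'l)"
  proof
    fix u v :: 'l
    assume "fslot (fpos u + CARD('l) - fpos t) = (fslot (fpos v + CARD('l) - fpos t) :: 'l)"
    then have "(fpos u + CARD('l) - fpos t) mod CARD('l) = (fpos v + CARD('l) - fpos t) mod CARD('l)"
      by (simp add: fslot_eq_iff)
    then have "fpos u = fpos v"
      by (rule modarith3[OF fpos_lt fpos_lt fpos_lt[of t]])
    then show "u = v" by (simp add: fpos_inj)
  qed
  then show ?thesis
    using finite_UNIV_inj_surj[of "(\<lambda>u::'l. fslot (fpos u + CARD('l) - fpos t) :: 'l)"] finite_class.finite_UNIV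
    unfolding bij_def by blast
qed

lemma bc_tprod: "bc (tprod A B) = bc A ** bc B"
  for A :: "('n::finite,'q::finite,'l::enum) tensor" and B :: "('q,'p::finite,'l) tensor"
proof (rule vecI, rule vecI)
  fix r :: "'n \<times> 'l" and c :: "'p \<times> 'l"
  obtain i s where r: "r = (i, s)" by (cases r)
  obtain j t where c: "c = (j, t)" by (cases c)
  let ?L = "CARD('l)"
  let ?sig = "\<lambda>u::'l. fslot (fpos u + ?L - fpos t) :: 'l"
  define H where "H m = (\<Sum>q\<in>UNIV. A $ i $ q $ fslot (fpos (fslot (fpos s + ?L - fpos t) :: 'l) + ?L - fpos m) * B $ q $ j $ m)" for m :: 'l
  have "bc (tprod A B) $ r $ c = (\<Sum>m\<in>UNIV. H m)"
    by (simp add: bc_entry tprod_def r c H_def)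
  also have "\<dots> = (\<Sum>u\<in>UNIV. H (?sig u))"
    using sum.reindex_bij_betw[of ?sig UNIV UNIV H] shift_bij[of t] by (simp add: bij_betw_def)
  also have "\<dots> = (\<Sum>u\<in>UNIV. \<Sum>q\<in>UNIV. A $ i $ q $ fslot (fpos s + ?L - fpos u) * B $ q $ j $ ?sig u)"
  proof (rule sum.cong[OF refl], unfold H_def, rule sum.cong[OF refl])
    fix u q
    have "(fslot (fpos (fslot (fpos s + ?L - fpos t) :: 'l) + ?L - fpos (?sig u)) :: 'l) = fslot (fpos s + ?L - fpos u)"
      unfolding fpos_fslot fslot_eq_iff
      by (rule modarith1) auto
    then show "A $ i $ q $ fslot (fpos (fslot (fpos s + ?L - fpos t) :: 'l) + ?L - fpos (?sig u)) * B $ q $ j $ ?sig u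
       = A $ i $ q $ fslot (fpos s + ?L - fpos u) * B $ q $ j $ ?sig u" by simp
  qed
  also have "\<dots> = (\<Sum>q\<in>UNIV. \<Sum>u\<in>UNIV. A $ i $ q $ fslot (fpos s + ?L - fpos u) * B $ q $ j $ ?sig u)"
    by (rule sum.swap)
  also have "\<dots> = (\<Sum>k\<in>(UNIV::'q set) \<times> (UNIV::'l set). A $ i $ fst k $ fslot (fpos s + ?L - fpos (snd k)) * B $ fst k $ j $ ?sig (snd k))"
    by (simp add: sum.cartesian_product split_def)
  also have "\<dots> = (bc A ** bc B) $ r $ c"
    by (simp add: matrix_matrix_mult_def bc_entry r c UNIV_Times_UNIV)
  finally show "bc (tprod A B) $ r $ c = (bc A ** bc B) $ r $ c" .
qed

lemma bc_ttrans: "bc (ttrans A) = transpose (bc A)"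
  for A :: "('n::finite,'p::finite,'l::enum) tensor"
proof (rule vecI, rule vecI)
  fix r :: "'p \<times> 'l" and c :: "'n \<times> 'l"
  have e: "(fslot (CARD('l) - (fpos (snd r) + CARD('l) - fpos (snd c)) mod CARD('l)) :: 'l)
     = fslot (fpos (snd c) + CARD('l) - fpos (snd r))"
    unfolding fslot_eq_iff by (rule modarith2) auto
  have "bc (ttrans A) $ r $ c = A $ fst c $ fst r $ fslot (CARD('l) - (fpos (snd r) + CARD('l) - fpos (snd c)) mod CARD('l))"
    by (simp add: bc_entry ttrans_def)
  also have "\<dots> = transpose (bc A) $ r $ c"
    unfolding e by (simp add: bc_entry transpose_def)
  finally show "bc (ttrans A) $ r $ c = transpose (bc A) $ r $ c" .
qed

lemma bc_tid: "bc (tid :: ('n::finite,'n,'l::enum) tensor) = mat 1"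
proof (rule vecI, rule vecI)
  fix r c :: "'n \<times> 'l"
  have e: "(fpos (snd r) + CARD('l) - fpos (snd c)) mod CARD('l) = 0 \<longleftrightarrow> snd r = snd c"
  proof -
    have "(fpos (snd r) + CARD('l) - fpos (snd c)) mod CARD('l) = 0 \<longleftrightarrow> fpos (snd r) = fpos (snd c)"
      by (rule modarith4[OF fpos_lt fpos_lt])
    then show ?thesis by (simp add: fpos_inj)
  qed
  have "bc (tid :: ('n,'n,'l) tensor) $ r $ c = (if fst r = fst c \<and> snd r = snd c then 1 else 0)"
    by (simp only: bc_entry tid_def vec_lambda_beta fpos_fslot e)
  then show "bc (tid :: ('n,'n,'l) tensor) $ r $ c = mat 1 $ r $ c"
    by (simp add: mat_def prod_eq_iff)
qed

lemma bc_inj: "bc A = bc B \<Longrightarrow> A = B"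
  for A B :: "('n::finite,'p::finite,'l::enum) tensor"
proof -
  assume h: "bc A = bc B"
  show "A = B"
  proof (rule vecI, rule vecI, rule vecI)
    fix i j k
    have "bc A $ (i,k) $ (j, fslot 0) = bc B $ (i,k) $ (j, fslot 0)" using h by simp
    moreover have "fpos (fslot 0 :: 'l) = 0" by simp
    moreover have "(fslot (fpos k + CARD('l)) :: 'l) = fslot (fpos k)"
      unfolding fslot_eq_iff by simp
    ultimately show "A $ i $ j $ k = B $ i $ j $ k" by (simp add: bc_entry)
  qed
qed

lemma bc_eq_iff: "bc A = bc B \<longleftrightarrow> A = B" using bc_inj by blast

lemma bc_add: "bc (A + B) = bc A + bc B" by (simp add: bc_def vec_eq_iff)
lemma bc_diff: "bc (A - B) = bc A - bc B" by (simp add: bc_def vec_eq_iff)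
lemma bc_minus: "bc (- A) = - bc A" by (simp add: bc_def vec_eq_iff)
lemma bc_scaleR: "bc (c *\<^sub>R A) = c *\<^sub>R bc A" by (simp add: bc_def vec_eq_iff)
lemma bc_zero: "bc 0 = 0" by (simp add: bc_def vec_eq_iff)

lemmas bc_simps = bc_tprod bc_ttrans bc_tid bc_add bc_diff bc_minus bc_scaleR bc_zero

lemma mm_diff_left: "(A - B) ** C = A ** C - B ** (C::real^'c^'b)" for A B :: "real^'b^'a"
  by (simp add: matrix_matrix_mult_def vec_eq_iff sum_subtractf algebra_simps)
lemma mm_diff_right: "C ** (A - B) = C ** A - C ** (B::real^'c^'b)" for C :: "real^'b^'a"
  by (simp add: matrix_matrix_mult_def vec_eq_iff sum_subtractf algebra_simps)
lemma mm_add_left: "(A + B) ** C = A ** C + B ** (C::real^'c^'b)" for A B :: "real^'b^'a"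
  by (simp add: matrix_matrix_mult_def vec_eq_iff sum.distrib algebra_simps)
lemma mm_add_right: "C ** (A + B) = C ** A + C ** (B::real^'c^'b)" for C :: "real^'b^'a"
  by (simp add: matrix_matrix_mult_def vec_eq_iff sum.distrib algebra_simps)
lemma mm_scale_left: "(k *\<^sub>R A) ** C = k *\<^sub>R (A ** (C::real^'c^'b))" for A :: "real^'b^'a"
  by (simp add: matrix_matrix_mult_def vec_eq_iff sum_distrib_left algebra_simps)
lemma mm_scale_right: "C ** (k *\<^sub>R A) = k *\<^sub>R (C ** (A::real^'c^'b))" for C :: "real^'b^'a"
  by (simp add: matrix_matrix_mult_def vec_eq_iff sum_distrib_left algebra_simps)
lemma mm_zero_left: "(0::real^'b^'a) ** (C::real^'c^'b) = 0"
  by (simp add: matrix_matrix_mult_def vec_eq_iff)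
lemma mm_zero_right: "(C::real^'b^'a) ** (0::real^'c^'b) = 0"
  by (simp add: matrix_matrix_mult_def vec_eq_iff)
lemma tr_diff: "transpose (A - B) = transpose A - transpose (B::real^'b^'a)"
  by (simp add: transpose_def vec_eq_iff)
lemma tr_add: "transpose (A + B) = transpose A + transpose (B::real^'b^'a)"
  by (simp add: transpose_def vec_eq_iff)
lemma tr_minus: "transpose (- A) = - transpose (A::real^'b^'a)"
  by (simp add: transpose_def vec_eq_iff)

lemmas mm_simps = mm_diff_left mm_diff_right mm_add_left mm_add_right mm_scale_left mm_scale_right
  mm_zero_left mm_zero_right tr_diff tr_add tr_minus transpose_scalar matrix_transpose_mul
  transpose_transpose transpose_mat

lemma bc_tP_sym: "transpose (bc (tP X)) = bc (tP X)"
  by (simp add: tP_def bc_simps mm_simps)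

lemma bc_tW: "bc (tW X V) = (bc (tP X) ** bc V) ** transpose (bc X) - (bc X ** transpose (bc V)) ** bc (tP X)"
  by (simp add: tW_def bc_simps)

lemma tW_skew: "ttrans (tW X V) = - tW X V"
  unfolding bc_eq_iff[symmetric] bc_ttrans bc_minus bc_tW
  by (simp add: mm_simps bc_tP_sym matrix_mul_assoc)

lemma skew_inj:
  fixes S :: "real^'m^'m"
  assumes "transpose S = - S" "(mat 1 - (1/2) *\<^sub>R S) *v x = 0"
  shows "x = 0"
proof -
  have "x \<bullet> (S *v x) = (x v* S) \<bullet> x" by (rule dot_lmul_matrix[symmetric])
  also have "x v* S = transpose S *v x" by simp
  also have "\<dots> = - (S *v x)" unfolding assms(1) by (simp add: matrix_vector_mult_def vec_eq_iff sum_negf)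
  finally have "x \<bullet> (S *v x) = - ((S *v x) \<bullet> x)" by simp
  then have z: "x \<bullet> (S *v x) = 0" by (simp add: inner_commute)
  have "x = ((1/2) *\<^sub>R S) *v x" using assms(2)
    by (simp add: algebra_simps matrix_vector_mult_diff_rdistrib)
  also have "((1/2) *\<^sub>R S) *v x = (1/2) *\<^sub>R (S *v x)"
    by (simp add: matrix_vector_mult_def vec_eq_iff sum_distrib_left)
  finally have "x = (1/2) *\<^sub>R (S *v x)" .
  then have "x \<bullet> x = (1/2) * (x \<bullet> (S *v x))"
    by (metis inner_scaleR_right)
  then show ?thesis using z by simp
qed

lemma tprod_linear: "linear (\<lambda>B. tprod A B)"
  for A :: "('n::finite,'q::finite,'l::enum) tensor"
proof (rule linearI)
  fix B C :: "('q,'p::finite,'l) tensor" and c :: real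
  show "tprod A (B + C) = tprod A B + tprod A C"
    unfolding bc_eq_iff[symmetric] by (simp add: bc_simps mm_simps)
  show "tprod A (c *\<^sub>R B) = c *\<^sub>R tprod A B"
    unfolding bc_eq_iff[symmetric] by (simp add: bc_simps mm_simps)
qed

lemma tinv_from_matrix:
  fixes A :: "('n::finite,'n,'l::enum) tensor"
  assumes inv: "invertible (bc A)"
  shows "tinvertible A \<and> bc (tinv A) ** bc A = mat 1 \<and> bc A ** bc (tinv A) = mat 1"
proof -
  obtain Ai where Ai: "bc A ** Ai = mat 1" "Ai ** bc A = mat 1"
    using inv unfolding invertible_def by blast
  have "inj (\<lambda>B::('n,'n,'l) tensor. tprod A B)"
  proof
    fix B C :: "('n,'n,'l) tensor"
    assume "tprod A B = tprod A C"
    from arg_cong[where f=bc, OF this] have "bc A ** bc B = bc A ** bc C" by (simp only: bc_tprod)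
    then have "Ai ** (bc A ** bc B) = Ai ** (bc A ** bc C)" by simp
    then have "bc B = bc C" by (simp only: matrix_mul_assoc Ai matrix_mul_lid)
    then show "B = C" by (rule bc_inj)
  qed
  then have "surj (\<lambda>B::('n,'n,'l) tensor. tprod A B)"
    using linear_injective_imp_surjective[OF tprod_linear] by blast
  from surjD[OF this, of tid] obtain B :: "('n,'n,'l) tensor" where "tid = tprod A B" by blast
  then have B: "tprod A B = tid" by simp
  from arg_cong[where f=bc, OF B] have AB: "bc A ** bc B = mat 1" by (simp only: bc_tprod bc_tid)
  have BAi: "bc B = Ai"
  proof -
    have "Ai ** (bc A ** bc B) = Ai" by (simp only: AB matrix_mul_rid)
    then show ?thesis by (simp only: matrix_mul_assoc Ai matrix_mul_lid)
  qed
  have BA: "tprod B A = tid"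
    by (rule bc_inj) (simp only: bc_tprod bc_tid BAi Ai)
  have uniq: "C = B" if "tprod C A = tid" for C
  proof -
    from arg_cong[where f=bc, OF that] have "bc C ** bc A = mat 1" by (simp only: bc_tprod bc_tid)
    then have "(bc C ** bc A) ** Ai = Ai" by (simp only: matrix_mul_lid)
    then have "bc C = Ai" by (simp only: Ai matrix_mul_rid flip: matrix_mul_assoc)
    then show ?thesis by (intro bc_inj) (simp only: BAi)
  qed
  have ti: "tinv A = B"
    unfolding tinv_def
  proof (rule the_equality)
    show "tprod A B = tid \<and> tprod B A = tid" using B BA by blast
    fix C assume "tprod A C = tid \<and> tprod C A = tid"
    then show "C = B" using uniq by blast
  qed
  have "tinvertible A" unfolding tinvertible_def using B BA by blast
  then show ?thesis unfolding ti using AB BAi Ai by simp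
qed

definition tM :: "('n::finite,'p::finite,'l::enum) tensor \<Rightarrow> ('n,'p,'l) tensor \<Rightarrow> ('n,'n,'l) tensor" where
  "tM X V = tid - (1/2) *\<^sub>R tW X V"

lemma bc_tW_skew: "transpose (bc (tW X V)) = - bc (tW X V)"
  by (metis bc_minus bc_ttrans tW_skew)

lemma bc_tM_invertible: "invertible (bc (tM X V))"
proof -
  let ?S = "bc (tW X V)"
  have e: "bc (tM X V) = mat 1 - (1/2) *\<^sub>R ?S" by (simp add: tM_def bc_simps)
  have "inj ((*v) (bc (tM X V)))"
  proof
    fix x y assume "bc (tM X V) *v x = bc (tM X V) *v y"
    then have "(mat 1 - (1/2) *\<^sub>R ?S) *v (x - y) = 0"
      by (simp add: e matrix_vector_mult_diff_distrib)
    then have "x - y = 0" by (rule skew_inj[OF bc_tW_skew])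
    then show "x = y" by simp
  qed
  then have "det (matrix ((*v) (bc (tM X V)))) \<noteq> 0"
    using det_nz_iff_inj[OF matrix_vector_mul_linear[of "bc (tM X V)"]] by blast
  then have "det (bc (tM X V)) \<noteq> 0"
    by (metis matrix_of_matrix_vector_mul)
  then show ?thesis using invertible_det_nz by blast
qed

lemma tM_inv: "tinvertible (tM X V) \<and> bc (tinv (tM X V)) ** bc (tM X V) = mat 1
   \<and> bc (tM X V) ** bc (tinv (tM X V)) = mat 1"
  by (rule tinv_from_matrix[OF bc_tM_invertible])

lemma cayley_tM: "cayley_retr X V = tprod (tprod (tinv (tM X V)) (tid + (1/2) *\<^sub>R tW X V)) X"
  by (simp add: cayley_retr_def tM_def)

lemma cayley_stiefel:
  fixes X :: "('n::finite,'p::finite,'l::enum) tensor"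
  assumes X: "X \<in> tstiefel"
  shows "cayley_retr X V \<in> tstiefel"
proof -
  let ?S = "bc (tW X V)"
  define A where "A = bc (tM X V)"
  define Ap where "Ap = bc (tid + (1/2) *\<^sub>R tW X V :: ('n,'n,'l) tensor)"
  define Bi where "Bi = bc (tinv (tM X V))"
  define x where "x = bc X"
  have xx: "transpose x ** x = mat 1" using X unfolding tstiefel_def x_def
    by (metis (mono_tags) bc_tid bc_tprod bc_ttrans mem_Collect_eq)
  have BA: "Bi ** A = mat 1" and AB: "A ** Bi = mat 1" using tM_inv A_def Bi_def by auto
  have tA: "transpose A = Ap"
    by (simp add: A_def Ap_def tM_def bc_simps mm_simps bc_tW_skew)
  have tAp: "transpose Ap = A" using tA by (metis transpose_transpose)
  have comm: "A ** Ap = Ap ** A"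
    by (simp add: A_def Ap_def tM_def bc_simps mm_simps algebra_simps)
  have "(transpose Bi ** A) ** (Ap ** Bi) = transpose Bi ** (A ** Ap) ** Bi"
    by (simp add: matrix_mul_assoc)
  also have "\<dots> = transpose Bi ** Ap ** (A ** Bi)"
    by (simp add: comm matrix_mul_assoc)
  also have "\<dots> = transpose Bi ** Ap" by (simp add: AB)
  also have "\<dots> = transpose (transpose Ap ** Bi)" by (simp add: matrix_transpose_mul)
  also have "\<dots> = mat 1" by (simp add: tAp AB transpose_mat)
  finally have key: "(transpose Bi ** A) ** (Ap ** Bi) = mat 1" .
  have c1: "Bi ** Ap = Ap ** Bi"
  proof -
    have "Bi ** Ap = Bi ** Ap ** (A ** Bi)" by (simp add: AB)
    also have "\<dots> = Bi ** (A ** Ap) ** Bi" by (simp add: comm matrix_mul_assoc)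
    also have "\<dots> = (Bi ** A) ** Ap ** Bi" by (simp add: matrix_mul_assoc)
    also have "\<dots> = Ap ** Bi" by (simp add: BA)
    finally show ?thesis .
  qed
  have tC: "transpose (Bi ** Ap) = transpose Bi ** A"
    using c1 by (metis matrix_transpose_mul tAp)
  have "bc (cayley_retr X V) = (Bi ** Ap) ** x"
    by (simp add: cayley_tM bc_tprod Bi_def Ap_def x_def)
  then have "bc (tprod (ttrans (cayley_retr X V)) (cayley_retr X V))
     = transpose x ** (transpose (Bi ** Ap) ** (Bi ** Ap)) ** x"
    by (simp add: bc_tprod bc_ttrans matrix_transpose_mul matrix_mul_assoc)
  also have "\<dots> = mat 1"
    unfolding tC c1[symmetric] using key xx by (simp add: c1 matrix_mul_assoc)
  finally show ?thesis unfolding tstiefel_def by (simp add: bc_eq_iff[symmetric] bc_tid)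
qed

lemma tinv_tid: "tinv (tid :: ('n::finite,'n,'l::enum) tensor) = tid"
proof -
  have t: "tprod tid (tid :: ('n,'n,'l) tensor) = tid"
    unfolding bc_eq_iff[symmetric] by (simp add: bc_simps)
  have "bc (tinv (tid :: ('n,'n,'l) tensor)) ** bc tid = mat 1"
    using tinv_from_matrix[of "tid :: ('n,'n,'l) tensor"] by (simp add: bc_tid invertible_def) 
  then show ?thesis by (simp add: bc_tid bc_eq_iff[symmetric])
qed

lemma tr_zero: "transpose (0::real^'b^'a) = 0"
  by (simp add: transpose_def vec_eq_iff)

lemma tW_zero: "tW X 0 = 0"
  unfolding bc_eq_iff[symmetric] by (simp add: tW_def bc_simps mm_simps tr_zero)

lemma cayley_zero: "cayley_retr X 0 = X"
  unfolding cayley_retr_def tW_zero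
  by (simp add: tinv_tid bc_eq_iff[symmetric] bc_simps)

inductive_set PP :: "('z::real_normed_vector \<Rightarrow> real) set" where
  pconst: "(\<lambda>z. c) \<in> PP"
| plin: "bounded_linear f \<Longrightarrow> f \<in> PP"
| padd: "f \<in> PP \<Longrightarrow> g \<in> PP \<Longrightarrow> (\<lambda>z. f z + g z) \<in> PP"
| pmult: "f \<in> PP \<Longrightarrow> g \<in> PP \<Longrightarrow> (\<lambda>z. f z * g z) \<in> PP"
| pinv: "f \<in> PP \<Longrightarrow> (\<forall>z. f z \<noteq> 0) \<Longrightarrow> (\<lambda>z. inverse (f z)) \<in> PP"

lemma pminus: "f \<in> PP \<Longrightarrow> (\<lambda>z. - f z) \<in> PP"
  using pmult[OF pconst[of "-1"], of f] by simp

lemma pdiff: "f \<in> PP \<Longrightarrow> g \<in> PP \<Longrightarrow> (\<lambda>z. f z - g z) \<in> PP"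
  using padd[OF _ pminus, of f g] by simp

lemma pdiv: "f \<in> PP \<Longrightarrow> g \<in> PP \<Longrightarrow> (\<forall>z. g z \<noteq> 0) \<Longrightarrow> (\<lambda>z. f z / g z) \<in> PP"
  using pmult[OF _ pinv, of f g] by (simp add: divide_inverse)

lemma psum: "finite S \<Longrightarrow> (\<And>s. s \<in> S \<Longrightarrow> f s \<in> PP) \<Longrightarrow> (\<lambda>z. \<Sum>s\<in>S. f s z) \<in> PP"
proof (induction S rule: finite_induct)
  case empty then show ?case using pconst[of 0] by simp
next
  case (insert x F)
  then show ?case using padd[of "f x" "\<lambda>z. \<Sum>s\<in>F. f s z"] by simp
qed

lemma pprod: "finite S \<Longrightarrow> (\<And>s. s \<in> S \<Longrightarrow> f s \<in> PP) \<Longrightarrow> (\<lambda>z. \<Prod>s\<in>S. f s z) \<in> PP"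
proof (induction S rule: finite_induct)
  case empty then show ?case using pconst[of 1] by simp
next
  case (insert x F)
  then show ?case using pmult[of "f x" "\<lambda>z. \<Prod>s\<in>F. f s z"] by simp
qed

lemma PP_deriv:
  "f \<in> PP \<Longrightarrow> \<exists>f'. (\<forall>x. (f has_derivative f' x) (at x)) \<and> (\<forall>h. (\<lambda>x. f' x h) \<in> PP)"
proof (induction rule: PP.induct)
  case (pconst c)
  show ?case by (rule exI[of _ "\<lambda>x h. 0"]) (auto intro: PP.pconst)
next
  case (plin f)
  show ?case
    by (rule exI[of _ "\<lambda>x h. f h"]) (auto intro: PP.pconst bounded_linear.has_derivative[OF plin, OF has_derivative_ident])
next
  case (padd f g)
  then obtain f' g' where f': "\<forall>x. (f has_derivative f' x) (at x)" "\<forall>h. (\<lambda>x. f' x h) \<in> PP"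
    and g': "\<forall>x. (g has_derivative g' x) (at x)" "\<forall>h. (\<lambda>x. g' x h) \<in> PP" by blast
  show ?case
    by (rule exI[of _ "\<lambda>x h. f' x h + g' x h"]) (use f' g' in \<open>auto intro!: has_derivative_add PP.padd\<close>)
next
  case (pmult f g)
  then obtain f' g' where f': "\<forall>x. (f has_derivative f' x) (at x)" "\<forall>h. (\<lambda>x. f' x h) \<in> PP"
    and g': "\<forall>x. (g has_derivative g' x) (at x)" "\<forall>h. (\<lambda>x. g' x h) \<in> PP" by blast
  show ?case
    by (rule exI[of _ "\<lambda>x h. f x * g' x h + f' x h * g x"])
      (use f' g' pmult.hyps in \<open>auto intro!: has_derivative_mult PP.padd PP.pmult\<close>)
next
  case (pinv f)
  then obtain f' where f': "\<forall>x. (f has_derivative f' x) (at x)" "\<forall>h. (\<lambda>x. f' x h) \<in> PP" by blast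
  have d: "((\<lambda>z. inverse (f z)) has_derivative (\<lambda>h. - (inverse (f x) * f' x h * inverse (f x)))) (at x)" for x
    using has_derivative_compose[OF f'(1)[rule_format, of x] has_derivative_inverse'[of "f x" UNIV]] pinv.hyps(2)
    by simp
  have "(\<lambda>x. - (inverse (f x) * f' x h * inverse (f x))) \<in> PP" for h
    by (intro pminus PP.pmult PP.pinv pinv.hyps f'(2)[rule_format])
  then show ?case
    by (intro exI[of _ "\<lambda>x h. - (inverse (f x) * f' x h * inverse (f x))"]) (use d in blast)
qed

definition VP :: "('z::real_normed_vector \<Rightarrow> 'b::euclidean_space) \<Rightarrow> bool" where
  "VP f \<longleftrightarrow> (\<forall>b\<in>Basis. (\<lambda>z. f z \<bullet> b) \<in> PP)"

lemma VP_deriv: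
  assumes "VP f"
  shows "\<exists>f'. (\<forall>x. (f has_derivative f' x) (at x)) \<and> (\<forall>h. VP (\<lambda>x. f' x h))"
proof -
  have "\<forall>b\<in>Basis. \<exists>d. (\<forall>x. ((\<lambda>z. f z \<bullet> b) has_derivative d x) (at x)) \<and> (\<forall>h. (\<lambda>x. d x h) \<in> PP)"
    using assms PP_deriv unfolding VP_def by blast
  then obtain d where d: "\<And>b. b \<in> Basis \<Longrightarrow> (\<forall>x. ((\<lambda>z. f z \<bullet> b) has_derivative d b x) (at x)) \<and> (\<forall>h. (\<lambda>x. d b x h) \<in> PP)"
    by metis
  define f' where "f' x h = (\<Sum>b\<in>Basis. d b x h *\<^sub>R b)" for x h
  have fe: "f = (\<lambda>z. \<Sum>b\<in>Basis. (f z \<bullet> b) *\<^sub>R b)"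
    by (simp add: euclidean_representation)
  have "(f has_derivative f' x) (at x)" for x
  proof -
    have "((\<lambda>z. \<Sum>b\<in>Basis. (f z \<bullet> b) *\<^sub>R b) has_derivative (\<lambda>h. \<Sum>b\<in>Basis. d b x h *\<^sub>R b)) (at x)"
      by (intro has_derivative_sum has_derivative_scaleR_left) (use d in blast)
    then show ?thesis using fe f'_def by (metis (no_types, lifting) ext)
  qed
  moreover have "VP (\<lambda>x. f' x h)" for h
    unfolding VP_def
  proof
    fix b0 :: 'b assume b0: "b0 \<in> Basis"
    have "(\<lambda>x. f' x h \<bullet> b0) = (\<lambda>x. d b0 x h)"
      unfolding f'_def using b0 by (simp add: inner_sum_left inner_Basis if_distrib sum.delta cong: if_cong)
    then show "(\<lambda>x. f' x h \<bullet> b0) \<in> PP" using d[OF b0] by simp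
  qed
  ultimately show ?thesis by blast
qed

definition dV :: "('z::real_normed_vector \<Rightarrow> 'b::euclidean_space) \<Rightarrow> 'z \<Rightarrow> 'z \<Rightarrow> 'b" where
  "dV f = (SOME f'. (\<forall>x. (f has_derivative f' x) (at x)) \<and> (\<forall>h. VP (\<lambda>x. f' x h)))"

lemma dV: "VP f \<Longrightarrow> (\<forall>x. (f has_derivative dV f x) (at x)) \<and> (\<forall>h. VP (\<lambda>x. dV f x h))"
proof -
  assume a: "VP f"
  show ?thesis unfolding dV_def by (rule someI_ex[OF VP_deriv[OF a]])
qed

primrec GG :: "('z::real_normed_vector \<Rightarrow> 'b::euclidean_space) \<Rightarrow> 'z list \<Rightarrow> 'z \<Rightarrow> 'b" where
  "GG f [] = f"
| "GG f (h # hs) = (\<lambda>x. dV (GG f hs) x h)"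

lemma GG_VP: "VP f \<Longrightarrow> VP (GG f hs)"
  by (induction hs) (auto dest: dV)

lemma VP_smooth:
  fixes f :: "'a::euclidean_space \<Rightarrow> 'b::euclidean_space"
  assumes "VP f"
  shows "smooth_on UNIV f"
  unfolding smooth_on_def
proof (intro conjI exI[of _ "\<lambda>k x hs. GG f hs x"] allI impI ballI)
  show "open (UNIV :: 'a set)" by simp
  fix x :: 'a show "GG f [] x = f x" by simp
next
  fix k and x :: 'a and hs :: "'a list"
  assume "x \<in> UNIV \<and> length hs = k"
  have "VP (GG f hs)" using GG_VP[OF assms] .
  then have "(GG f hs has_derivative dV (GG f hs) x) (at x)" using dV by blast
  then show "((\<lambda>y. GG f hs y) has_derivative (\<lambda>h. GG f (h # hs) x)) (at x)"
    by simp
qed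

definition TP :: "('z::real_normed_vector \<Rightarrow> ('n::finite,'p::finite,'l::enum) tensor) \<Rightarrow> bool" where
  "TP f \<longleftrightarrow> (\<forall>i j k. (\<lambda>z. f z $ i $ j $ k) \<in> PP)"

definition MP :: "('z::real_normed_vector \<Rightarrow> real^'b::finite^'a::finite) \<Rightarrow> bool" where
  "MP f \<longleftrightarrow> (\<forall>a b. (\<lambda>z. f z $ a $ b) \<in> PP)"

lemma TP_const: "TP (\<lambda>z. C)"
  unfolding TP_def by (auto intro: pconst)

lemma TP_lin: "bounded_linear f \<Longrightarrow> TP f"
  unfolding TP_def
  by (auto intro!: plin bounded_linear_compose[OF bounded_linear_vec_nth])

lemma TP_add: "TP f \<Longrightarrow> TP g \<Longrightarrow> TP (\<lambda>z. f z + g z)"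
  unfolding TP_def by (auto intro: padd)

lemma TP_diff: "TP f \<Longrightarrow> TP g \<Longrightarrow> TP (\<lambda>z. f z - g z)"
  unfolding TP_def by (auto intro: pdiff)

lemma TP_scaleR: "TP f \<Longrightarrow> TP (\<lambda>z. c *\<^sub>R f z)"
  unfolding TP_def by (auto intro: pmult pconst)

lemma TP_ttrans: "TP f \<Longrightarrow> TP (\<lambda>z. ttrans (f z))"
  unfolding TP_def ttrans_def by simp

lemma TP_tprod: "TP f \<Longrightarrow> TP g \<Longrightarrow> TP (\<lambda>z. tprod (f z) (g z))"
  unfolding TP_def tprod_def by (auto intro!: psum pmult)

lemma MP_bc: "TP f \<Longrightarrow> MP (\<lambda>z. bc (f z))"
  unfolding TP_def MP_def bc_entry by simp

lemma MP_det: "MP A \<Longrightarrow> (\<lambda>z. det (A z)) \<in> PP"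
  unfolding MP_def det_def
  by (auto intro!: psum pmult pprod pconst finite_permutations)

lemma tensor_entry_bc: "T $ i $ j $ k = bc T $ (i,k) $ (j, fslot 0)"
  for T :: "('n::finite,'p::finite,'l::enum) tensor"
proof -
  have "fpos (fslot 0 :: 'l) = 0" by simp
  moreover have "(fslot (fpos k + CARD('l)) :: 'l) = fslot (fpos k)"
    unfolding fslot_eq_iff by simp
  ultimately show ?thesis by (simp add: bc_entry)
qed

lemma cramer_entry:
  fixes A Bm :: "real^'m::finite^'m"
  assumes "A ** Bm = mat 1" "det A \<noteq> 0"
  shows "Bm $ r $ c = det (\<chi> a b. if b = r then (mat 1 :: real^'m^'m) $ a $ c else A $ a $ b) / det A"
proof -
  have "A *v (\<chi> k. Bm $ k $ c) = (\<chi> a. (mat 1 :: real^'m^'m) $ a $ c)"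
    using assms(1) by (simp add: matrix_vector_mult_def matrix_matrix_mult_def vec_eq_iff)
  then have "(\<chi> k. Bm $ k $ c) = (\<chi> k. det (\<chi> a b. if b = k then (\<chi> a. (mat 1 :: real^'m^'m) $ a $ c) $ a else A $ a $ b) / det A)"
    using cramer[OF assms(2)] by blast
  then have "(\<chi> k. Bm $ k $ c) $ r = (\<chi> k. det (\<chi> a b. if b = k then (\<chi> a. (mat 1 :: real^'m^'m) $ a $ c) $ a else A $ a $ b) / det A) $ r"
    by simp
  then show ?thesis by (simp only: vec_lambda_beta)
qed

lemma TP_tW: "TP F \<Longrightarrow> TP G \<Longrightarrow> TP (\<lambda>z. tW (F z) (G z))"
  unfolding tW_def tP_def
  by (intro TP_diff TP_tprod TP_ttrans TP_scaleR TP_const) auto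

lemma TP_tM: "TP F \<Longrightarrow> TP G \<Longrightarrow> TP (\<lambda>z. tM (F z) (G z))"
  unfolding tM_def by (intro TP_diff TP_scaleR TP_const TP_tW)

lemma TP_tinv_tM:
  fixes F G :: "'z::real_normed_vector \<Rightarrow> ('n::finite,'p::finite,'l::enum) tensor"
  assumes F: "TP F" and G: "TP G"
  shows "TP (\<lambda>z. tinv (tM (F z) (G z)))"
  unfolding TP_def
proof (intro allI)
  fix i j k
  define A where "A z = bc (tM (F z) (G z))" for z
  have MA: "MP A" unfolding A_def by (rule MP_bc[OF TP_tM[OF F G]])
  have dA: "\<forall>z. det (A z) \<noteq> 0" unfolding A_def using bc_tM_invertible invertible_det_nz by blast
  have e: "tinv (tM (F z) (G z)) $ i $ j $ k =
     det (\<chi> a b. if b = (i,k) then (mat 1 :: real^('n\<times>'l)^('n\<times>'l)) $ a $ (j, fslot 0) else A z $ a $ b) / det (A z)" for z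
    unfolding tensor_entry_bc[of "tinv (tM (F z) (G z))"]
    by (rule cramer_entry) (use tM_inv dA A_def in auto)
  have "MP (\<lambda>z. (\<chi> a b. if b = (i,k) then (mat 1 :: real^('n\<times>'l)^('n\<times>'l)) $ a $ (j, fslot 0) else A z $ a $ b))"
    unfolding MP_def
  proof (intro allI)
    fix a b :: "'n \<times> 'l"
    show "(\<lambda>z. (\<chi> a b. if b = (i,k) then (mat 1 :: real^('n\<times>'l)^('n\<times>'l)) $ a $ (j, fslot 0) else A z $ a $ b) $ a $ b) \<in> PP"
    proof (cases "b = (i,k)")
      case True then show ?thesis by (simp add: pconst)
    next
      case False then show ?thesis using MA[unfolded MP_def, rule_format, of a b] by simp
    qed
  qed
  then show "(\<lambda>z. tinv (tM (F z) (G z)) $ i $ j $ k) \<in> PP"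
    unfolding e by (intro pdiv MP_det MA dA)
qed

lemma tensor_basis:
  fixes b :: "('n::finite,'p::finite,'l::enum) tensor"
  assumes "b \<in> Basis"
  shows "\<exists>i j k. \<forall>T::('n,'p,'l) tensor. T \<bullet> b = T $ i $ j $ k"
proof -
  obtain i u where u: "u \<in> Basis" "b = axis i u" using assms unfolding Basis_vec_def by blast
  obtain j w where w: "w \<in> Basis" "u = axis j w" using u(1) unfolding Basis_vec_def by blast
  obtain k v where v: "v \<in> (Basis :: real set)" "w = axis k v" using w(1) unfolding Basis_vec_def by blast
  have "v = 1" using v(1) by simp
  then have "\<forall>T::('n,'p,'l) tensor. T \<bullet> b = T $ i $ j $ k"
    using u(2) w(2) v(2) by (simp add: inner_axis)
  then show ?thesis by blast
qed

lemma TP_VP: "TP f \<Longrightarrow> VP f"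
  for f :: "'z::real_normed_vector \<Rightarrow> ('n::finite,'p::finite,'l::enum) tensor"
  unfolding VP_def TP_def
proof
  fix b :: "('n,'p,'l) tensor"
  assume a: "\<forall>i j k. (\<lambda>z. f z $ i $ j $ k) \<in> PP" and b: "b \<in> Basis"
  obtain i j k where e: "\<And>T::('n,'p,'l) tensor. T \<bullet> b = T $ i $ j $ k" using tensor_basis[OF b] by blast
  have "(\<lambda>z. f z \<bullet> b) = (\<lambda>z. f z $ i $ j $ k)" by (simp only: e)
  then show "(\<lambda>z. f z \<bullet> b) \<in> PP" using a by simp
qed

lemma TP_cayley: "TP (\<lambda>z::('n::finite,'p::finite,'l::enum) tensor \<times> ('n,'p,'l) tensor. cayley_retr (fst z) (snd z))"
proof -
  have f: "TP (\<lambda>z::('n,'p,'l) tensor \<times> ('n,'p,'l) tensor. fst z)" by (rule TP_lin) (rule bounded_linear_fst)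
  have s: "TP (\<lambda>z::('n,'p,'l) tensor \<times> ('n,'p,'l) tensor. snd z)" by (rule TP_lin) (rule bounded_linear_snd)
  show ?thesis unfolding cayley_tM
    by (intro TP_tprod TP_tinv_tM TP_add TP_const TP_scaleR TP_tW f s)
qed

lemma cayley_smooth: "smooth_on UNIV (\<lambda>z::('n::finite,'p::finite,'l::enum) tensor \<times> ('n,'p,'l) tensor. cayley_retr (fst z) (snd z))"
  by (rule VP_smooth[OF TP_VP[OF TP_cayley]])

lemma tprod_linear_left: "linear (\<lambda>A. tprod A B)"
  for B :: "('q::finite,'p::finite,'l::enum) tensor"
proof (rule linearI)
  fix A C :: "('n::finite,'q,'l) tensor" and c :: real
  show "tprod (A + C) B = tprod A B + tprod C B"
    unfolding bc_eq_iff[symmetric] by (simp add: bc_simps mm_simps)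
  show "tprod (c *\<^sub>R A) B = c *\<^sub>R tprod A B"
    unfolding bc_eq_iff[symmetric] by (simp add: bc_simps mm_simps)
qed

lemma bb_tprod: "bounded_bilinear (tprod :: ('n::finite,'q::finite,'l::enum) tensor \<Rightarrow> ('q,'p::finite,'l) tensor \<Rightarrow> _)"
  unfolding bilinear_conv_bounded_bilinear[symmetric] bilinear_def
  using tprod_linear tprod_linear_left by blast

lemma bl_ttrans: "bounded_linear (ttrans :: ('n::finite,'p::finite,'l::enum) tensor \<Rightarrow> _)"
  unfolding linear_conv_bounded_linear[symmetric]
proof (rule linearI)
  fix A C :: "('n,'p,'l) tensor" and c :: real
  show "ttrans (A + C) = ttrans A + ttrans C"
    unfolding bc_eq_iff[symmetric] by (simp add: bc_simps mm_simps)
  show "ttrans (c *\<^sub>R A) = c *\<^sub>R ttrans A"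
    unfolding bc_eq_iff[symmetric] by (simp add: bc_simps mm_simps)
qed

lemma mm_minus_right: "C ** (- A) = - (C ** (A::real^'c^'b))" for C :: "real^'b^'a"
  by (simp add: matrix_matrix_mult_def vec_eq_iff sum_negf)

lemma bl_tW: "bounded_linear (tW X)"
  for X :: "('n::finite,'p::finite,'l::enum) tensor"
  unfolding linear_conv_bounded_linear[symmetric]
proof (rule linearI)
  fix A C :: "('n,'p,'l) tensor" and c :: real
  show "tW X (A + C) = tW X A + tW X C"
    unfolding bc_eq_iff[symmetric] by (simp add: tW_def bc_simps mm_simps algebra_simps)
  show "tW X (c *\<^sub>R A) = c *\<^sub>R tW X A"
    unfolding bc_eq_iff[symmetric] by (simp add: tW_def bc_simps mm_simps algebra_simps)
qed

lemma tprod_tid_left: "tprod tid A = A"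
  unfolding bc_eq_iff[symmetric] by (simp add: bc_simps)
lemma tprod_tid_right: "tprod A tid = A"
  unfolding bc_eq_iff[symmetric] by (simp add: bc_simps)
lemma tprod_zero_right: "tprod A 0 = 0"
  unfolding bc_eq_iff[symmetric] by (simp add: bc_simps mm_simps)

lemma tangent_cond:
  fixes X :: "('n::finite,'p::finite,'l::enum) tensor"
  assumes X: "X \<in> tstiefel" and v: "v \<in> tangent_space tstiefel X"
  shows "tprod (ttrans v) X + tprod (ttrans X) v = 0"
proof -
  obtain \<gamma> e where e: "e > 0" and g0: "\<gamma> 0 = X" and gin: "\<forall>t\<in>{-e<..<e}. \<gamma> t \<in> tstiefel"
    and gd: "(\<gamma> has_vector_derivative v) (at 0)"
    using v unfolding tangent_space_def by blast
  have gd': "(\<gamma> has_derivative (\<lambda>t. t *\<^sub>R v)) (at 0)"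
    using gd unfolding has_vector_derivative_def .
  have d1: "((\<lambda>t. tprod (ttrans (\<gamma> t)) (\<gamma> t)) has_derivative
      (\<lambda>h. tprod (ttrans (\<gamma> 0)) (h *\<^sub>R v) + tprod (ttrans (h *\<^sub>R v)) (\<gamma> 0))) (at 0)"
    by (rule bounded_bilinear.FDERIV[OF bb_tprod bounded_linear.has_derivative[OF bl_ttrans gd'] gd'])
  have d2: "((\<lambda>t. tprod (ttrans (\<gamma> t)) (\<gamma> t)) has_derivative (\<lambda>h. 0)) (at (0::real))"
  proof (rule has_derivative_transform_within_open[OF has_derivative_const[of tid] _ _])
    show "open {-e<..<e}" by simp
    show "(0::real) \<in> {-e<..<e}" using e by simp
    fix t :: real assume "t \<in> {-e<..<e}"
    then show "tid = tprod (ttrans (\<gamma> t)) (\<gamma> t)" using gin unfolding tstiefel_def by auto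
  qed
  have "(\<lambda>h. tprod (ttrans (\<gamma> 0)) (h *\<^sub>R v) + tprod (ttrans (h *\<^sub>R v)) (\<gamma> 0)) = (\<lambda>h. 0)"
    using has_derivative_unique[OF d1 d2] .
  from fun_cong[OF this, of 1] show ?thesis using g0 by (simp add: add.commute)
qed

lemma tW_X_tangent:
  fixes X h :: "('n::finite,'p::finite,'l::enum) tensor"
  assumes X: "X \<in> tstiefel" and hc: "tprod (ttrans h) X + tprod (ttrans X) h = 0"
  shows "tprod (tW X h) X = h"
proof -
  define x where "x = bc X"
  define y where "y = bc h"
  define P where "P = bc (tP X)"
  have xx: "transpose x ** x = mat 1" using X unfolding tstiefel_def x_def
    by (metis (mono_tags) bc_tid bc_tprod bc_ttrans mem_Collect_eq)
  have yx: "transpose y ** x = - (transpose x ** y)"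
  proof -
    have "bc (tprod (ttrans h) X + tprod (ttrans X) h) = 0" using hc by (simp add: bc_zero)
    then have "transpose y ** x + transpose x ** y = 0" by (simp add: bc_simps x_def y_def)
    then show ?thesis by (simp add: eq_neg_iff_add_eq_0)
  qed
  have Pe: "P = mat 1 - (1/2) *\<^sub>R (x ** transpose x)" by (simp add: P_def tP_def bc_simps x_def)
  have PX: "P ** x = (1/2) *\<^sub>R x"
  proof -
    have "P ** x = x - (1/2) *\<^sub>R (x ** (transpose x ** x))" by (simp add: Pe mm_simps matrix_mul_assoc)
    also have "\<dots> = x - (1/2) *\<^sub>R x" by (simp add: xx)
    also have "\<dots> = (1 - 1/2) *\<^sub>R x" by (simp only: scaleR_diff_left scaleR_one)
    also have "\<dots> = (1/2) *\<^sub>R x" by simp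
    finally show ?thesis .
  qed
  have "bc (tprod (tW X h) X) = ((P ** y) ** transpose x - (x ** transpose y) ** P) ** x"
    by (simp add: bc_tprod bc_tW P_def x_def y_def)
  also have "\<dots> = (P ** y) ** (transpose x ** x) - (x ** transpose y) ** (P ** x)"
    by (simp add: mm_simps matrix_mul_assoc)
  also have "\<dots> = P ** y - (1/2) *\<^sub>R (x ** (transpose y ** x))"
    by (simp add: xx PX mm_simps matrix_mul_assoc)
  also have "\<dots> = y - (1/2) *\<^sub>R (x ** (transpose x ** y)) + (1/2) *\<^sub>R (x ** (transpose x ** y))"
    by (simp add: yx Pe mm_simps matrix_mul_assoc mm_minus_right)
  also have "\<dots> = y" by simp
  finally show ?thesis unfolding y_def by (rule bc_inj)
qed

lemma tprod_tinv_tM: "tprod (tinv (tM X V)) (tM X V) = tid"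
  by (rule bc_inj) (simp add: bc_tprod bc_tid tM_inv)

lemma tM_zero: "tM X 0 = tid"
  by (simp add: tM_def tW_zero)

lemma cayley_deriv:
  fixes X :: "('n::finite,'p::finite,'l::enum) tensor"
  shows "(cayley_retr X has_derivative (\<lambda>h. tprod (tW X h) X)) (at 0)"
proof -
  define N where "N v = tinv (tM X v)" for v :: "('n,'p,'l) tensor"
  have f: "TP (\<lambda>z::('n,'p,'l) tensor \<times> ('n,'p,'l) tensor. fst z)" by (rule TP_lin) (rule bounded_linear_fst)
  have s: "TP (\<lambda>z::('n,'p,'l) tensor \<times> ('n,'p,'l) tensor. snd z)" by (rule TP_lin) (rule bounded_linear_snd)
  have TPN: "TP (\<lambda>z::('n,'p,'l) tensor \<times> ('n,'p,'l) tensor. tinv (tM (fst z) (snd z)))"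
    by (rule TP_tinv_tM[OF f s])
  obtain f' where f': "\<forall>z. ((\<lambda>z::('n,'p,'l) tensor \<times> ('n,'p,'l) tensor. tinv (tM (fst z) (snd z))) has_derivative f' z) (at z)"
    using VP_deriv[OF TP_VP[OF TPN]] by blast
  have pair: "((\<lambda>v::('n,'p,'l) tensor. (X, v)) has_derivative (\<lambda>h. (0, h))) (at 0)"
    by (rule has_derivative_Pair[OF has_derivative_const has_derivative_ident])
  define N' where "N' h = f' (X, 0) (0, h)" for h :: "('n,'p,'l) tensor"
  have Nd: "(N has_derivative N') (at 0)"
  proof -
    have "((\<lambda>v. tinv (tM (fst (X, v)) (snd (X, v)))) has_derivative (\<lambda>h. f' (X, 0) (0, h))) (at 0)"
      using has_derivative_compose[OF pair, of "\<lambda>z. tinv (tM (fst z) (snd z))" "f' (X,0)"] f' by simp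
    then show ?thesis unfolding N_def N'_def by simp
  qed
  have Wd: "((\<lambda>v. tW X v) has_derivative (\<lambda>h. tW X h)) (at 0)"
    by (rule bounded_linear_imp_has_derivative[OF bl_tW])
  have Md: "((\<lambda>v. tM X v) has_derivative (\<lambda>h. 0 - (1/2) *\<^sub>R tW X h)) (at 0)"
    unfolding tM_def by (rule has_derivative_diff[OF has_derivative_const has_derivative_scaleR_right[OF Wd]])
  have Mpd: "((\<lambda>v. tid + (1/2) *\<^sub>R tW X v) has_derivative (\<lambda>h. 0 + (1/2) *\<^sub>R tW X h)) (at 0)"
    by (rule has_derivative_add[OF has_derivative_const has_derivative_scaleR_right[OF Wd]])
  have N0: "N 0 = tid" by (simp add: N_def tM_zero tinv_tid)
  have prod1: "((\<lambda>v. tprod (N v) (tM X v)) has_derivative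
      (\<lambda>h. tprod (N 0) (0 - (1/2) *\<^sub>R tW X h) + tprod (N' h) (tM X 0))) (at 0)"
    by (rule bounded_bilinear.FDERIV[OF bb_tprod Nd Md])
  have "(\<lambda>v. tprod (N v) (tM X v)) = (\<lambda>v. tid)" by (simp add: N_def tprod_tinv_tM)
  then have prod0: "((\<lambda>v. tprod (N v) (tM X v)) has_derivative (\<lambda>h. 0)) (at 0)"
    by (simp add: has_derivative_const)
  have "(\<lambda>h. tprod (N 0) (0 - (1/2) *\<^sub>R tW X h) + tprod (N' h) (tM X 0)) = (\<lambda>h. 0)"
    by (rule has_derivative_unique[OF prod1 prod0])
  note eqN = this
  have N'e: "N' h = (1/2) *\<^sub>R tW X h" for h
    using fun_cong[OF eqN, of h] by (simp add: N0 tM_zero tprod_tid_left tprod_tid_right algebra_simps)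
  have inner: "((\<lambda>v. tprod (N v) (tid + (1/2) *\<^sub>R tW X v)) has_derivative
      (\<lambda>h. tprod (N 0) (0 + (1/2) *\<^sub>R tW X h) + tprod (N' h) (tid + (1/2) *\<^sub>R tW X 0))) (at 0)"
    by (rule bounded_bilinear.FDERIV[OF bb_tprod Nd Mpd])
  have outer: "((\<lambda>v. tprod (tprod (N v) (tid + (1/2) *\<^sub>R tW X v)) X) has_derivative
      (\<lambda>h. tprod (tprod (N 0) (tid + (1/2) *\<^sub>R tW X 0)) 0 +
           tprod (tprod (N 0) (0 + (1/2) *\<^sub>R tW X h) + tprod (N' h) (tid + (1/2) *\<^sub>R tW X 0)) X)) (at 0)"
    by (rule bounded_bilinear.FDERIV[OF bb_tprod inner has_derivative_const])
  have e1: "(\<lambda>v. tprod (tprod (N v) (tid + (1/2) *\<^sub>R tW X v)) X) = cayley_retr X"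
    by (simp add: N_def cayley_tM fun_eq_iff)
  have e2: "(\<lambda>h. tprod (tprod (N 0) (tid + (1/2) *\<^sub>R tW X 0)) 0 +
           tprod (tprod (N 0) (0 + (1/2) *\<^sub>R tW X h) + tprod (N' h) (tid + (1/2) *\<^sub>R tW X 0)) X)
     = (\<lambda>h. tprod (tW X h) X)"
  proof
    fix h
    have "(1/2) *\<^sub>R tW X h + (1/2) *\<^sub>R tW X h = tW X h"
      by (simp flip: scaleR_add_left)
    then show "tprod (tprod (N 0) (tid + (1/2) *\<^sub>R tW X 0)) 0 +
           tprod (tprod (N 0) (0 + (1/2) *\<^sub>R tW X h) + tprod (N' h) (tid + (1/2) *\<^sub>R tW X 0)) X
       = tprod (tW X h) X"
      by (simp add: N0 N'e tW_zero tprod_tid_left tprod_tid_right tprod_zero_right)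
  qed
  show ?thesis using outer unfolding e1 e2 .
qed


lemma deriv_within_tangent:
  fixes X :: "('n::finite,'p::finite,'l::enum) tensor"
  assumes X: "X \<in> tstiefel"
  shows "(cayley_retr X has_derivative (\<lambda>v. v)) (at 0 within tangent_space tstiefel X)"
proof -
  let ?T = "tangent_space tstiefel X"
  let ?D = "\<lambda>h. tprod (tW X h) X"
  have d: "(cayley_retr X has_derivative ?D) (at 0 within ?T)"
    by (rule has_derivative_at_withinI[OF cayley_deriv])
  have Dv: "?D y = y" if "y \<in> ?T" for y
    by (rule tW_X_tangent[OF X tangent_cond[OF X that]])
  have ev: "eventually (\<lambda>y. (1 / norm (y - 0)) *\<^sub>R (cayley_retr X y - (cayley_retr X 0 + ?D (y - 0)))
      = (1 / norm (y - 0)) *\<^sub>R (cayley_retr X y - (cayley_retr X 0 + (y - 0)))) (at 0 within ?T)"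
    unfolding eventually_at_filter by (rule always_eventually) (auto simp: Dv)
  from d have "((\<lambda>y. (1 / norm (y - 0)) *\<^sub>R (cayley_retr X y - (cayley_retr X 0 + ?D (y - 0)))) \<longlongrightarrow> 0) (at 0 within ?T)"
    unfolding has_derivative_within by blast
  then have "((\<lambda>y. (1 / norm (y - 0)) *\<^sub>R (cayley_retr X y - (cayley_retr X 0 + (y - 0)))) \<longlongrightarrow> 0) (at 0 within ?T)"
    using tendsto_cong[OF ev] by blast
  then show ?thesis unfolding has_derivative_within using bounded_linear_ident by blast
qed

theorem mainTheorem7:
  assumes "CARD('p) \<le> CARD('n)"
  shows "(\<forall>X\<in>(tstiefel :: (('n::finite, 'p::finite, 'l::enum) tensor) set). \<forall>V\<in>tangent_space tstiefel X.
            tskew (tW X V) \<and> tinvertible (tid - (1/2) *\<^sub>R tW X V))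
         \<and> is_retraction (tstiefel :: (('n, 'p, 'l::enum) tensor) set) cayley_retr"
proof (intro conjI ballI)
  fix X :: "('n,'p,'l) tensor" and V
  show "tskew (tW X V)" unfolding tskew_def by (rule tW_skew)
  show "tinvertible (tid - (1/2) *\<^sub>R tW X V)" using tM_inv[of X V] unfolding tM_def by blast
next
  show "is_retraction (tstiefel :: (('n, 'p, 'l::enum) tensor) set) cayley_retr"
    unfolding is_retraction_def
  proof (intro conjI ballI)
    show "smooth_on_set (tangent_bundle (tstiefel :: (('n, 'p, 'l::enum) tensor) set)) (\<lambda>(x, v). cayley_retr x v)"
      unfolding smooth_on_set_def
    proof
      fix z :: "('n,'p,'l) tensor \<times> ('n,'p,'l) tensor"
      show "\<exists>U F. z \<in> U \<and> smooth_on U F \<and> (\<forall>y\<in>U \<inter> tangent_bundle tstiefel. F y = (case y of (x, v) \<Rightarrow> cayley_retr x v))"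
        by (intro exI[of _ UNIV] exI[of _ "\<lambda>z. cayley_retr (fst z) (snd z)"]) (auto simp: cayley_smooth split_def)
    qed
  next
    fix X :: "('n,'p,'l) tensor" and V
    assume "X \<in> tstiefel"
    then show "cayley_retr X V \<in> tstiefel" by (rule cayley_stiefel)
  next
    fix X :: "('n,'p,'l) tensor"
    show "cayley_retr X 0 = X" by (rule cayley_zero)
  next
    fix X :: "('n,'p,'l) tensor"
    assume "X \<in> tstiefel"
    then show "(cayley_retr X has_derivative (\<lambda>v. v)) (at 0 within tangent_space tstiefel X)"
      by (rule deriv_within_tangent)
  qed
qed

end
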